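(* Let $K\subset\mathbb{R}^n$ and $C\subset\mathbb{R}^m$ be nonempty, convex, closed and bounded sets, and let $f,h:\mathbb{R}^n\times\mathbb{R}^m\to\mathbb{R}$ be continuous functions such that, for every $y\in K$, $f(y,\cdot)$ and $h(y,\cdot)$ are convex, and such that $f$ takes only positive values. Let $\varepsilon>0$ and $y\in K$. Then the problem $\min\{h(y,z)+\varepsilon f^2(y,z)\mid z\in C\}$ admits at least one solution, i.e. $\mathcal{S}_\varepsilon(y)\neq\emptyset$, where $\mathcal{S}_\varepsilon(y)=\operatorname{argmin}\{h(y,z)+\varepsilon f^2(y,z)\mid z\in C\}$. Moreover, there exists a constant $\kappa_y\in\mathbb{R}$ such that $f(y,x)=\kappa_y$ for all $x\in\mathcal{S}_\varepsilon(y)$.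
   Context: $f^2(y,z)$ denotes $(f(y,z))^2$. *)

theory Defs
  imports "HOL-Analysis.Analysis"
begin

definition S_eps ::
  "('a \<times> 'b \<Rightarrow> real) \<Rightarrow> ('a \<times> 'b \<Rightarrow> real) \<Rightarrow> 'b set \<Rightarrow> real \<Rightarrow> 'a \<Rightarrow> 'b set" where
  "S_eps h f C \<epsilon> y =
     {z \<in> C. \<forall>w \<in> C. h (y, z) + \<epsilon> * (f (y, z))\<^sup>2 \<le> h (y, w) + \<epsilon> * (f (y, w))\<^sup>2}"

end

theory Submission
  imports Defs
begin

lemma one_minus_half: "1 - 1/2 = (1/2::real)" by simp

lemma half_sq: "((a::real)\<^sup>2 + b\<^sup>2) / 2 - ((a + b) / 2)\<^sup>2 = (a - b)\<^sup>2 / 4"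
  by (simp add: power2_eq_square field_simps)

theorem lemma2p1:
  fixes K :: "(real ^ 'n) set" and C :: "(real ^ 'm) set"
    and f h :: "(real ^ 'n) \<times> (real ^ 'm) \<Rightarrow> real"
    and \<epsilon> :: real and y :: "real ^ 'n"
  assumes "K \<noteq> {}" "convex K" "closed K" "bounded K"
    and "C \<noteq> {}" "convex C" "closed C" "bounded C"
    and "continuous_on UNIV f" "continuous_on UNIV h"
    and "\<And>y'. y' \<in> K \<Longrightarrow> convex_on UNIV (\<lambda>z. f (y', z))"
    and "\<And>y'. y' \<in> K \<Longrightarrow> convex_on UNIV (\<lambda>z. h (y', z))"
    and "\<And>p. f p > 0"
    and "\<epsilon> > 0" and "y \<in> K"
  shows "S_eps h f C \<epsilon> y \<noteq> {} \<and> (\<exists>\<kappa>. \<forall>x \<in> S_eps h f C \<epsilon> y. f (y, x) = \<kappa>)"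
proof
  define G where "G = (\<lambda>z. h (y, z) + \<epsilon> * (f (y, z))\<^sup>2)"
  have cp: "continuous_on C (\<lambda>z. (y, z))" by (intro continuous_intros)
  have ch: "continuous_on C (\<lambda>z. h (y, z))"
    using continuous_on_compose2[OF assms(10) cp] by auto
  have cf: "continuous_on C (\<lambda>z. f (y, z))"
    using continuous_on_compose2[OF assms(9) cp] by auto
  have "continuous_on C G" unfolding G_def by (intro continuous_intros ch cf)
  moreover have "compact C" using assms(7,8) by (simp add: compact_eq_bounded_closed)
  ultimately obtain x where "x \<in> C" "\<forall>w\<in>C. G x \<le> G w"
    using continuous_attains_inf[of C G] assms(5) by blast
  then show "S_eps h f C \<epsilon> y \<noteq> {}" unfolding S_eps_def G_def by blast
  show "\<exists>\<kappa>. \<forall>x \<in> S_eps h f C \<epsilon> y. f (y, x) = \<kappa>"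
  proof (cases "S_eps h f C \<epsilon> y = {}")
    case True then show ?thesis by blast
  next
    case False
    then obtain x1 where x1: "x1 \<in> S_eps h f C \<epsilon> y" by blast
    show ?thesis
    proof (intro exI ballI)
      fix x2 assume x2: "x2 \<in> S_eps h f C \<epsilon> y"
      show "f (y, x2) = f (y, x1)"
      proof (rule ccontr)
        assume ne: "f (y, x2) \<noteq> f (y, x1)"
        define m where "m = (1 - 1/2) *\<^sub>R x1 + (1/2) *\<^sub>R x2"
        have c1: "x1 \<in> C" and c2: "x2 \<in> C" using x1 x2 unfolding S_eps_def by auto
        have mC: "m \<in> C" unfolding m_def using convexD[OF assms(6) c1 c2, of "1/2" "1/2"] by (simp only: one_minus_half)
        have hm: "h (y, m) \<le> (1 - 1/2) * h (y, x1) + (1/2) * h (y, x2)"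
          unfolding m_def using convex_onD[OF assms(12)[OF assms(15)], of "1/2" x1 x2] by simp
        have fm: "f (y, m) \<le> (1 - 1/2) * f (y, x1) + (1/2) * f (y, x2)"
          unfolding m_def using convex_onD[OF assms(11)[OF assms(15)], of "1/2" x1 x2] by simp
        have p: "0 < f (y, m)" using assms(13) by blast
        have "(f (y, m))\<^sup>2 \<le> ((f (y, x1) + f (y, x2)) / 2)\<^sup>2"
          using fm p by (intro power_mono) auto
        also have "\<dots> < ((f (y, x1))\<^sup>2 + (f (y, x2))\<^sup>2) / 2"
        proof -
          have "0 < (f (y, x1) - f (y, x2))\<^sup>2" using ne by simp
          moreover have "((f (y, x1))\<^sup>2 + (f (y, x2))\<^sup>2) / 2 - ((f (y, x1) + f (y, x2)) / 2)\<^sup>2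
              = (f (y, x1) - f (y, x2))\<^sup>2 / 4" by (rule half_sq)
          ultimately show ?thesis by linarith
        qed
        finally have sq: "(f (y, m))\<^sup>2 < ((f (y, x1))\<^sup>2 + (f (y, x2))\<^sup>2) / 2" .
        have "G m < (G x1 + G x2) / 2"
          unfolding G_def using hm mult_strict_left_mono[OF sq assms(14)] by (simp add: algebra_simps)
        moreover have "G x1 \<le> G m" "G x2 \<le> G m"
          using x1 x2 mC unfolding S_eps_def G_def by auto
        ultimately show False by simp
      qed
    qed
  qed
qed

end
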